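(* Let $X,Y$ be Banach spaces, let $-A$ be the generator of a strongly continuous semigroup $(T(t))_{t\ge0}$ on $X$, and let $C:\mathcal D(A)\to Y$ be linear and bounded for the graph norm. (i) If $(A,C)$ is an admissible and exactly observable BFC-system, then there is no sequence $(\lambda_n)$ in the approximate point spectrum $\sigma_A(A)$ with $\operatorname{Re}\lambda_n\to+\infty$, i.e. $\sup\{\operatorname{Re}\lambda:\lambda\in\sigma_A(A)\}<\infty$. (ii) In particular, if $C$ is an admissible zero-class operator for $A$ and $A$ has a sequence of approximate point spectrum with real parts tending to $+\infty$, then $C$ is not exactly observable (in any time $\eta>0$).
   Context: $\sigma_A(A)=\{\lambda\in\mathbb C: \inf_{x\in\mathcal D(A),\|x\|=1}\|\lambda x-Ax\|=0\}$. For $\tau\in(0,\infty]$ set $M(\tau)^2:=\sup_{x\in\mathcal D(A),\|x\|=1}\int_0^\tau\|CT(t)x\|_Y^2\,dt$ and $m(\tau)^2:=\inf_{x\in\mathcal D(A),\|x\|=1}\int_0^\tau\|CT(t)x\|_Y^2\,dt$. $C$ is admissible if $M(\tau)<\infty$ for some (equivalently all) finite $\tau>0$; exactly observable in time $\eta$ if $m(\eta)>0$; zero-class admissible if it is admissible and $\lim_{\tau\to0+}M(\tau)=0$. $(A,C)$ is a BFC-system if there exist $0<\eta<\tau$ such that $C$ is admissible and exactly observable in time $\tau$ and $M(\eta)<m(\tau)$. *)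

theory Defs
  imports "HOL-Analysis.Analysis"
begin

text \<open>The library has no class of complex normed vector spaces; we add one:
a real Banach space together with a compatible complex scalar multiplication.\<close>

class complex_banach = banach +
  fixes scaleC :: "complex \<Rightarrow> 'a \<Rightarrow> 'a" (infixr "*\<^sub>C" 75)
  assumes scaleC_add_right: "a *\<^sub>C (x + y) = a *\<^sub>C x + a *\<^sub>C y"
    and scaleC_add_left: "(a + b) *\<^sub>C x = a *\<^sub>C x + b *\<^sub>C x"
    and scaleC_scaleC: "a *\<^sub>C (b *\<^sub>C x) = (a * b) *\<^sub>C x"
    and scaleC_one: "1 *\<^sub>C x = x"
    and scaleC_of_real: "complex_of_real r *\<^sub>C x = r *\<^sub>R x"
    and norm_scaleC: "norm (a *\<^sub>C x) = cmod a * norm x"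

instantiation complex :: complex_banach
begin
definition scaleC_complex :: "complex \<Rightarrow> complex \<Rightarrow> complex" where
  "scaleC_complex a x = a * x"
instance
  by standard (auto simp: scaleC_complex_def algebra_simps norm_mult scaleR_conv_of_real)
end

definition clinear_on :: "'a::complex_banach set \<Rightarrow> ('a \<Rightarrow> 'b::complex_banach) \<Rightarrow> bool" where
  "clinear_on D f \<longleftrightarrow>
     (\<forall>x\<in>D. \<forall>y\<in>D. x + y \<in> D \<and> f (x + y) = f x + f y) \<and>
     (\<forall>a x. x \<in> D \<longrightarrow> a *\<^sub>C x \<in> D \<and> f (a *\<^sub>C x) = a *\<^sub>C f x)"

definition bounded_clinear_op :: "('a::complex_banach \<Rightarrow> 'b::complex_banach) \<Rightarrow> bool" where
  "bounded_clinear_op f \<longleftrightarrow> clinear_on UNIV f \<and> (\<exists>K. \<forall>x. norm (f x) \<le> K * norm x)"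

definition c0_semigroup :: "(real \<Rightarrow> 'a::complex_banach \<Rightarrow> 'a) \<Rightarrow> bool" where
  "c0_semigroup T \<longleftrightarrow>
     (\<forall>t\<ge>0. bounded_clinear_op (T t)) \<and>
     T 0 = id \<and>
     (\<forall>t\<ge>0. \<forall>s\<ge>0. T (t + s) = T t \<circ> T s) \<and>
     (\<forall>x. ((\<lambda>t. T t x) \<longlongrightarrow> x) (at_right 0))"

text \<open>The semigroup is generated by \<open>-A\<close>.  Domain of \<open>A\<close>:\<close>
definition gen_dom :: "(real \<Rightarrow> 'a::complex_banach \<Rightarrow> 'a) \<Rightarrow> 'a set" where
  "gen_dom T = {x. \<exists>y. ((\<lambda>h. (1 / h) *\<^sub>R (T h x - x)) \<longlongrightarrow> y) (at_right 0)}"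

definition genA :: "(real \<Rightarrow> 'a::complex_banach \<Rightarrow> 'a) \<Rightarrow> 'a \<Rightarrow> 'a" where
  "genA T x = - Lim (at_right 0) (\<lambda>h. (1 / h) *\<^sub>R (T h x - x))"

definition obs_operator :: "(real \<Rightarrow> 'a::complex_banach \<Rightarrow> 'a) \<Rightarrow> ('a \<Rightarrow> 'b::complex_banach) \<Rightarrow> bool" where
  "obs_operator T C \<longleftrightarrow> clinear_on (gen_dom T) C \<and>
     (\<exists>K. \<forall>x\<in>gen_dom T. norm (C x) \<le> K * (norm x + norm (genA T x)))"

definition approx_point_spectrum :: "(real \<Rightarrow> 'a::complex_banach \<Rightarrow> 'a) \<Rightarrow> complex set" where
  "approx_point_spectrum T =
     {l. (INF x\<in>{x\<in>gen_dom T. norm x = 1}. ennreal (norm (l *\<^sub>C x - genA T x))) = 0}"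

text \<open>\<open>obs_M2 T C \<tau> = M(\<tau>)\<^sup>2\<close> and \<open>obs_m2 T C \<tau> = m(\<tau>)\<^sup>2\<close>, as extended nonnegative reals,
for finite \<open>\<tau>\<close>.\<close>
definition obs_energy :: "(real \<Rightarrow> 'a::complex_banach \<Rightarrow> 'a) \<Rightarrow> ('a \<Rightarrow> 'b::complex_banach) \<Rightarrow> real \<Rightarrow> 'a \<Rightarrow> ennreal" where
  "obs_energy T C \<tau> x = (\<integral>\<^sup>+ t \<in> {0..\<tau>}. ennreal ((norm (C (T t x)))\<^sup>2) \<partial>lborel)"

definition obs_M2 :: "(real \<Rightarrow> 'a::complex_banach \<Rightarrow> 'a) \<Rightarrow> ('a \<Rightarrow> 'b::complex_banach) \<Rightarrow> real \<Rightarrow> ennreal" where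
  "obs_M2 T C \<tau> = (SUP x\<in>{x\<in>gen_dom T. norm x = 1}. obs_energy T C \<tau> x)"

definition obs_m2 :: "(real \<Rightarrow> 'a::complex_banach \<Rightarrow> 'a) \<Rightarrow> ('a \<Rightarrow> 'b::complex_banach) \<Rightarrow> real \<Rightarrow> ennreal" where
  "obs_m2 T C \<tau> = (INF x\<in>{x\<in>gen_dom T. norm x = 1}. obs_energy T C \<tau> x)"

definition admissible :: "(real \<Rightarrow> 'a::complex_banach \<Rightarrow> 'a) \<Rightarrow> ('a \<Rightarrow> 'b::complex_banach) \<Rightarrow> bool" where
  "admissible T C \<longleftrightarrow> (\<exists>\<tau>>0. obs_M2 T C \<tau> < \<infinity>)"

definition exactly_observable :: "(real \<Rightarrow> 'a::complex_banach \<Rightarrow> 'a) \<Rightarrow> ('a \<Rightarrow> 'b::complex_banach) \<Rightarrow> real \<Rightarrow> bool" where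
  "exactly_observable T C \<eta> \<longleftrightarrow> obs_m2 T C \<eta> > 0"

definition zero_class_admissible :: "(real \<Rightarrow> 'a::complex_banach \<Rightarrow> 'a) \<Rightarrow> ('a \<Rightarrow> 'b::complex_banach) \<Rightarrow> bool" where
  "zero_class_admissible T C \<longleftrightarrow> admissible T C \<and> ((obs_M2 T C) \<longlongrightarrow> 0) (at_right 0)"

text \<open>Comparing squares is equivalent to comparing \<open>M(\<eta>) < m(\<tau>)\<close>.\<close>
definition BFC_system :: "(real \<Rightarrow> 'a::complex_banach \<Rightarrow> 'a) \<Rightarrow> ('a \<Rightarrow> 'b::complex_banach) \<Rightarrow> bool" where
  "BFC_system T C \<longleftrightarrow> (\<exists>\<eta> \<tau>. 0 < \<eta> \<and> \<eta> < \<tau> \<and> admissible T C \<and>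
      exactly_observable T C \<tau> \<and> obs_M2 T C \<eta> < obs_m2 T C \<tau>)"

end

theory Submission
  imports Defs
begin


lemma banach_steinhaus_nat:
  fixes F :: "nat \<Rightarrow> 'a::banach \<Rightarrow> 'b::real_normed_vector"
  assumes lin: "\<And>n. bounded_linear (F n)"
    and pb: "\<And>x. \<exists>B. \<forall>n. norm (F n x) \<le> B"
  shows "\<exists>K. \<forall>n x. norm (F n x) \<le> K * norm x"
proof -
  define S where "S k = {x. \<forall>n. norm (F n x) \<le> real k}" for k :: nat
  have clS: "closed (S k)" for k
  proof -
    have "S k = (\<Inter>n. {x. norm (F n x) \<le> real k})" by (auto simp: S_def)
    moreover have "closed {x. norm (F n x) \<le> real k}" for n
      by (intro closed_Collect_le continuous_intros linear_continuous_on[OF lin])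
    ultimately show ?thesis by auto
  qed
  have U: "\<Union>(range S) = UNIV"
  proof safe
    fix x
    obtain B where "\<forall>n. norm (F n x) \<le> B" using pb by blast
    moreover obtain k where "B \<le> real k" using real_arch_simple by blast
    ultimately have "x \<in> S k" by (auto simp: S_def intro: order_trans)
    then show "x \<in> \<Union>(range S)" by blast
  qed simp
  have "euclidean interior_of \<Union>(range S) \<noteq> {}"
    using U by simp
  moreover have "countable (range S)" by simp
  ultimately obtain k where "euclidean interior_of S k \<noteq> {}"
    using Baire_category_alt[of euclidean "range S"] completely_metrizable_space_euclidean clS
    by (metis (no_types, lifting) closed_closedin imageE)
  then have "interior (S k) \<noteq> {}" by (simp add: interior_of_def interior_def) blast
  then obtain x0 where "x0 \<in> interior (S k)" by blast
  then obtain r where r: "r > 0" "ball x0 r \<subseteq> S k"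
    using mem_interior by blast
  have small: "norm (F n x) \<le> 2 * real k" if "norm x < r" for n x
  proof -
    have "x0 + x \<in> S k" "x0 \<in> S k" using r that by (auto simp: dist_norm)
    then have "norm (F n (x0 + x)) \<le> k" "norm (F n x0) \<le> k" by (auto simp: S_def)
    moreover have "F n x = F n (x0 + x) - F n x0"
      using linear_add[OF bounded_linear.linear[OF lin]] by simp
    ultimately show ?thesis using norm_triangle_ineq4[of "F n (x0 + x)" "F n x0"] by simp
  qed
  have "norm (F n x) \<le> (4 * real k / r) * norm x" for n x
  proof (cases "x = 0")
    case True
    then show ?thesis using linear_0[OF bounded_linear.linear[OF lin]] by simp
  next
    case False
    define c where "c = r / (2 * norm x)"
    have c: "c > 0" using False r by (simp add: c_def)
    have "norm (c *\<^sub>R x) < r" using False r by (simp add: c_def)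
    then have "norm (F n (c *\<^sub>R x)) \<le> 2 * real k" by (rule small)
    moreover have "F n (c *\<^sub>R x) = c *\<^sub>R F n x"
      using linear_scale[OF bounded_linear.linear[OF lin]] by simp
    ultimately have "c * norm (F n x) \<le> 2 * real k" using c by simp
    then have "norm (F n x) \<le> 2 * real k / c" using c by (simp add: field_simps)
    also have "\<dots> = (4 * real k / r) * norm x" using False r by (simp add: c_def field_simps)
    finally show ?thesis .
  qed
  then show ?thesis by blast
qed


lemma scaleC_zero_left[simp]: "(0::complex) *\<^sub>C x = 0"
  using scaleC_of_real[of 0 x] by simp

lemma scaleC_zero_right[simp]: "a *\<^sub>C (0::'a::complex_banach) = 0"
proof -
  have "a *\<^sub>C (0::'a) = a *\<^sub>C 0 + a *\<^sub>C 0" using scaleC_add_right[of a "0::'a" 0] by simp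
  then show ?thesis by simp
qed

lemma scaleC_minus_one: "(-1) *\<^sub>C x = - x"
  using scaleC_of_real[of "-1" x] by simp

lemma scaleC_minus_right: "a *\<^sub>C (- x) = - (a *\<^sub>C x)"
proof -
  have "a *\<^sub>C (- x) = a *\<^sub>C ((-1) *\<^sub>C x)" by (simp add: scaleC_minus_one)
  also have "\<dots> = ((-1) * a) *\<^sub>C x" by (simp add: scaleC_scaleC mult.commute)
  also have "\<dots> = (-1) *\<^sub>C (a *\<^sub>C x)" by (simp add: scaleC_scaleC)
  also have "\<dots> = - (a *\<^sub>C x)" by (rule scaleC_minus_one)
  finally show ?thesis .
qed

lemma scaleC_diff_right: "a *\<^sub>C (x - y) = a *\<^sub>C x - a *\<^sub>C y"
  using scaleC_add_right[of a x "-y"] by (simp add: scaleC_minus_right)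

lemma scaleC_diff_left: "(a - b) *\<^sub>C x = a *\<^sub>C x - b *\<^sub>C x"
proof -
  have "(a - b) *\<^sub>C x = a *\<^sub>C x + (-b) *\<^sub>C x" using scaleC_add_left[of a "-b" x] by simp
  moreover have "(-b) *\<^sub>C x = - (b *\<^sub>C x)"
    using scaleC_scaleC[of "-1" b x] by (simp add: scaleC_minus_one)
  ultimately show ?thesis by simp
qed

lemma scaleC_scaleR_left: "r *\<^sub>R (a *\<^sub>C x) = (complex_of_real r * a) *\<^sub>C x"
  by (simp add: scaleC_of_real[symmetric] scaleC_scaleC)

lemma scaleC_scaleR_right: "a *\<^sub>C (r *\<^sub>R x) = r *\<^sub>R (a *\<^sub>C x)"
  by (simp add: scaleC_of_real[symmetric] scaleC_scaleC mult.commute)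

lemma bounded_bilinear_scaleC: "bounded_bilinear (\<lambda>a (x::'a::complex_banach). a *\<^sub>C x)"
proof
  fix a a' :: complex and x x' :: 'a and r :: real
  show "(a + a') *\<^sub>C x = a *\<^sub>C x + a' *\<^sub>C x" by (rule scaleC_add_left)
  show "a *\<^sub>C (x + x') = a *\<^sub>C x + a *\<^sub>C x'" by (rule scaleC_add_right)
  show "(r *\<^sub>R a) *\<^sub>C x = r *\<^sub>R (a *\<^sub>C x)" by (simp add: scaleC_scaleR_left scaleR_conv_of_real)
  show "a *\<^sub>C (r *\<^sub>R x) = r *\<^sub>R (a *\<^sub>C x)" by (rule scaleC_scaleR_right)
next
  show "\<exists>K. \<forall>a (x::'a). norm (a *\<^sub>C x) \<le> norm a * norm x * K"
    by (rule exI[of _ 1]) (simp add: norm_scaleC)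
qed

lemma clinear_on_diff:
  assumes "clinear_on D f" "x \<in> D" "y \<in> D"
  shows "x - y \<in> D" "f (x - y) = f x - f y"
proof -
  have m: "(-1) *\<^sub>C y \<in> D" "f ((-1) *\<^sub>C y) = (-1) *\<^sub>C f y" using assms by (auto simp: clinear_on_def)
  have "x - y = x + (-1) *\<^sub>C y" by (simp add: scaleC_minus_one)
  then show "x - y \<in> D" "f (x - y) = f x - f y" using assms m by (auto simp: clinear_on_def scaleC_minus_one)
qed

lemma clinear_on_add:
  assumes "clinear_on D f" "x \<in> D" "y \<in> D"
  shows "x + y \<in> D" "f (x + y) = f x + f y"
  using assms by (auto simp: clinear_on_def)

lemma clinear_on_scale:
  assumes "clinear_on D f" "x \<in> D"
  shows "a *\<^sub>C x \<in> D" "f (a *\<^sub>C x) = a *\<^sub>C f x"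
  using assms by (auto simp: clinear_on_def)

lemma bounded_clinear_op_bl:
  assumes "bounded_clinear_op f"
  shows "bounded_linear f"
proof -
  obtain K where K: "\<And>x. norm (f x) \<le> K * norm x" using assms by (auto simp: bounded_clinear_op_def)
  have cl: "clinear_on UNIV f" using assms by (auto simp: bounded_clinear_op_def)
  show ?thesis
  proof (rule bounded_linear_intro)
    show "f (x + y) = f x + f y" for x y using cl by (auto simp: clinear_on_def)
    show "f (r *\<^sub>R x) = r *\<^sub>R f x" for r x
      using cl by (auto simp: clinear_on_def scaleC_of_real[symmetric])
    show "norm (f x) \<le> norm x * K" for x using K[of x] by (simp add: mult.commute)
  qed
qed

context
  fixes T :: "real \<Rightarrow> 'a::complex_banach \<Rightarrow> 'a"
  assumes c0: "c0_semigroup T"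
begin

lemma T_bl: "t \<ge> 0 \<Longrightarrow> bounded_linear (T t)"
  using c0 bounded_clinear_op_bl by (auto simp: c0_semigroup_def)

lemma T_C: "t \<ge> 0 \<Longrightarrow> T t (a *\<^sub>C x) = a *\<^sub>C T t x"
  using c0 by (auto simp: c0_semigroup_def bounded_clinear_op_def clinear_on_def)

lemma T0: "T 0 x = x"
  using c0 by (auto simp: c0_semigroup_def)

lemma T_add: "t \<ge> 0 \<Longrightarrow> s \<ge> 0 \<Longrightarrow> T (t + s) x = T t (T s x)"
  using c0 by (auto simp: c0_semigroup_def)

lemma T_strong: "((\<lambda>t. T t x) \<longlongrightarrow> x) (at_right 0)"
  using c0 by (auto simp: c0_semigroup_def)

lemma T_strong_eps:
  assumes "e > 0"
  shows "\<exists>d>0. \<forall>h. 0 \<le> h \<and> h < d \<longrightarrow> norm (T h x - x) < e"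
proof -
  have "eventually (\<lambda>t. dist (T t x) x < e) (at_right 0)"
    using T_strong assms by (rule tendstoD)
  then obtain b where b: "b > 0" "\<And>y. y > 0 \<Longrightarrow> y < b \<Longrightarrow> dist (T y x) x < e"
    unfolding eventually_at_right[of 0 "1::real", simplified] by auto
  show ?thesis
  proof (intro exI[of _ b] conjI allI impI)
    fix h assume "0 \<le> h \<and> h < b"
    then show "norm (T h x - x) < e"
      using b assms by (cases "h = 0") (auto simp: T0 dist_norm)
  qed (use b in auto)
qed

lemma T_local_bound: "\<exists>\<delta>>0. \<exists>K. \<forall>s\<in>{0..\<delta>}. \<forall>x. norm (T s x) \<le> K * norm x"
proof (rule ccontr)
  assume "\<not> ?thesis"
  then have "\<forall>n::nat. \<exists>s x. s \<in> {0..1/(real n+1)} \<and> norm (T s x) > real n * norm x"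
    by (metis divide_pos_pos linorder_not_le of_nat_0_le_iff zero_less_one add_pos_nonneg add.commute)
  then obtain s x where sx: "\<And>n. s n \<in> {0..1/(real n+1)}" "\<And>n. norm (T (s n) (x n)) > real n * norm (x n)"
    by metis
  have lin: "bounded_linear (T (s n))" for n using sx(1)[of n] T_bl by auto
  have pb: "\<exists>B. \<forall>n. norm (T (s n) y) \<le> B" for y
  proof -
    have "(\<lambda>n. T (s n) y) \<longlonglongrightarrow> y"
    proof (rule LIMSEQ_I)
      fix r :: real assume "r > 0"
      then obtain d where d: "d > 0" "\<And>h. 0 \<le> h \<and> h < d \<longrightarrow> norm (T h y - y) < r"
        using T_strong_eps by blast
      obtain N :: nat where N: "1 / d < real N" using reals_Archimedean2 by blast
      show "\<exists>no. \<forall>n\<ge>no. norm (T (s n) y - y) < r"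
      proof (intro exI allI impI)
        fix n assume "N \<le> n"
        then have "1/d < real n + 1" using N by linarith
        then have "1/(real n + 1) < d" using d(1)
          by (metis divide_less_eq mult.commute of_nat_add of_nat_less_0_iff of_nat_1 not_less add_pos_nonneg zero_less_one of_nat_0_le_iff frac_less2 less_eq_real_def)
        then show "norm (T (s n) y - y) < r" using d sx(1)[of n] by auto
      qed
    qed
    then have "Bseq (\<lambda>n. T (s n) y)" by (rule convergent_imp_Bseq[OF convergentI])
    then show ?thesis unfolding Bseq_def by auto
  qed
  obtain K where K: "\<And>n x. norm (T (s n) x) \<le> K * norm x"
    using banach_steinhaus_nat[of "\<lambda>n. T (s n)", OF lin pb] by blast
  obtain n :: nat where "K \<le> real n" using real_arch_simple by blast
  then have "K * norm (x n) \<le> real n * norm (x n)" by (simp add: mult_right_mono)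
  then show False using K[of n "x n"] sx(2)[of n] by linarith
qed

lemma T_bound: "\<exists>K\<ge>1. \<forall>s\<in>{0..\<eta>}. \<forall>x. norm (T s x) \<le> K * norm x"
proof -
  obtain \<delta> K0 where d: "\<delta> > 0" "\<And>s x. s \<in> {0..\<delta>} \<Longrightarrow> norm (T s x) \<le> K0 * norm x"
    using T_local_bound by blast
  define K1 where "K1 = max K0 1"
  have K1: "norm (T s x) \<le> K1 * norm x" if "s \<in> {0..\<delta>}" for s x
    using d(2)[OF that, of x] by (smt (verit) K1_def mult_right_mono norm_ge_zero)
  have K1ge: "K1 \<ge> 1" by (simp add: K1_def)
  have ind: "\<forall>s\<in>{0..real k * \<delta>}. \<forall>x. norm (T s x) \<le> K1^(k+1) * norm x" for k
  proof (induction k)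
    case 0
    then show ?case using K1ge by (auto simp: T0 intro: mult_right_mono[of 1 K1, simplified])
  next
    case (Suc k)
    show ?case
    proof (intro ballI allI)
      fix s x assume s: "s \<in> {0..real (Suc k) * \<delta>}"
      have pw: "K1 \<le> K1^(Suc k + 1)" using K1ge
        by (metis add_gr_0 less_numeral_extra(1) power_increasing_iff power_one_right order_less_imp_le le_add2 power_increasing)
      show "norm (T s x) \<le> K1^(Suc k + 1) * norm x"
      proof (cases "s \<le> \<delta>")
        case True
        then have "norm (T s x) \<le> K1 * norm x" using s K1 by auto
        also have "\<dots> \<le> K1^(Suc k + 1) * norm x" using pw by (simp add: mult_right_mono)
        finally show ?thesis .
      next
        case False
        have "T s x = T \<delta> (T (s - \<delta>) x)" using T_add[of \<delta> "s - \<delta>" x] False d(1) by simp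
        moreover have "s - \<delta> \<in> {0..real k * \<delta>}" using s False by (auto simp: algebra_simps)
        ultimately have "norm (T s x) \<le> K1 * (K1^(k+1) * norm x)"
          using K1[of \<delta> "T (s - \<delta>) x"] Suc.IH d(1) K1ge
          by (smt (verit, ccfv_SIG) atLeastAtMost_iff mult_left_mono)
        then show ?thesis by simp
      qed
    qed
  qed
  obtain k :: nat where "\<eta> / \<delta> \<le> real k" using real_arch_simple by blast
  then have "\<eta> \<le> real k * \<delta>" using d(1) by (simp add: divide_le_eq)
  moreover have "1 \<le> K1^(k+1)" using one_le_power[OF K1ge] by blast
  ultimately show ?thesis using ind[of k]
    by (intro exI[of _ "K1^(k+1)"]) auto
qed

end


context
  fixes T :: "real \<Rightarrow> 'a::complex_banach \<Rightarrow> 'a"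
  assumes c0: "c0_semigroup T"
begin

lemma T_diff: "t \<ge> 0 \<Longrightarrow> T t (x - y) = T t x - T t y"
  using T_bl[OF c0] linear_diff bounded_linear.linear by blast

lemma T_scaleR: "t \<ge> 0 \<Longrightarrow> T t (r *\<^sub>R x) = r *\<^sub>R T t x"
  using T_bl[OF c0] linear_scale bounded_linear.linear by blast

lemma T_plus: "t \<ge> 0 \<Longrightarrow> T t (x + y) = T t x + T t y"
  using T_bl[OF c0] linear_add bounded_linear.linear by blast

lemma T_cont_at: 
  assumes t: "t \<ge> 0"
  shows "((\<lambda>s. T s x) \<longlongrightarrow> T t x) (at t within {0..})"
proof -
  obtain K where K: "K \<ge> 1" "\<And>s x. s \<in> {0..t+1} \<Longrightarrow> norm (T s x) \<le> K * norm x"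
    using T_bound[OF c0, of "t+1"] by blast
  show ?thesis
  unfolding tendsto_iff eventually_at
  proof (intro allI impI)
    fix e :: real assume e: "e > 0"
    obtain d0 where d0: "d0 > 0" "\<And>h. 0 \<le> h \<and> h < d0 \<longrightarrow> norm (T h x - x) < e / K"
      using T_strong_eps[OF c0, of "e/K" x] e K(1) by auto
    show "\<exists>d>0. \<forall>s\<in>{0..}. s \<noteq> t \<and> dist s t < d \<longrightarrow> dist (T s x) (T t x) < e"
    proof (intro exI[of _ "min d0 1"] conjI ballI impI)
      show "min d0 1 > 0" using d0(1) by simp
    next
      fix s :: real assume s: "s \<in> {0..}" and st: "s \<noteq> t \<and> dist s t < min d0 1"
      show "dist (T s x) (T t x) < e"
      proof (cases "t \<le> s")
        case True
        have "T s x = T t (T (s - t) x)" using T_add[OF c0, of t "s - t" x] True t by simp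
        then have "T s x - T t x = T t (T (s - t) x - x)" using T_diff t by simp
        then have "norm (T s x - T t x) \<le> K * norm (T (s - t) x - x)" using K(2)[of t] t by simp
        also have "\<dots> < K * (e / K)"
          using d0(2)[of "s - t"] True st K(1) by (intro mult_strict_left_mono) (auto simp: dist_real_def)
        finally show ?thesis using K(1) by (simp add: dist_norm)
      next
        case False
        have "T t x = T s (T (t - s) x)" using T_add[OF c0, of s "t - s" x] False s by simp
        then have "T s x - T t x = T s (x - T (t - s) x)" using T_diff s by simp
        then have "norm (T s x - T t x) \<le> K * norm (x - T (t - s) x)" using K(2)[of s] s False by simp
        also have "\<dots> = K * norm (T (t - s) x - x)" by (simp add: norm_minus_commute)
        also have "\<dots> < K * (e / K)"
          using d0(2)[of "t - s"] False st K(1) by (intro mult_strict_left_mono) (auto simp: dist_real_def)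
        finally show ?thesis using K(1) by (simp add: dist_norm)
      qed
    qed
  qed
qed

lemma T_cont_on: "continuous_on {0..} (\<lambda>s. T s x)"
  unfolding continuous_on_def using T_cont_at by auto

lemma gen_char:
  assumes "((\<lambda>h. (1 / h) *\<^sub>R (T h z - z)) \<longlongrightarrow> y) (at_right 0)"
  shows "z \<in> gen_dom T" "genA T z = - y"
  using assms by (auto simp: gen_dom_def genA_def intro!: tendsto_Lim)

lemma gen_lim:
  assumes "x \<in> gen_dom T"
  shows "((\<lambda>h. (1 / h) *\<^sub>R (T h x - x)) \<longlongrightarrow> - genA T x) (at_right 0)"
proof -
  obtain y where y: "((\<lambda>h. (1 / h) *\<^sub>R (T h x - x)) \<longlongrightarrow> y) (at_right 0)"
    using assms by (auto simp: gen_dom_def)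
  then have "genA T x = - y" by (rule gen_char)
  then show ?thesis using y by simp
qed

lemma gen_T:
  assumes x: "x \<in> gen_dom T" and t: "t \<ge> 0"
  shows "T t x \<in> gen_dom T" "genA T (T t x) = T t (genA T x)"
proof -
  have "((\<lambda>h. T t ((1 / h) *\<^sub>R (T h x - x))) \<longlongrightarrow> T t (- genA T x)) (at_right 0)"
    using bounded_linear.tendsto[OF T_bl[OF c0 t] gen_lim[OF x]] .
  moreover have "eventually (\<lambda>h. T t ((1 / h) *\<^sub>R (T h x - x)) = (1 / h) *\<^sub>R (T h (T t x) - T t x)) (at_right 0)"
    unfolding eventually_at_right[of 0 "1::real", simplified]
  proof (intro exI[of _ 1] conjI allI impI)
    fix h :: real assume "0 < h"
    then have "T h (T t x) = T t (T h x)" using T_add[OF c0, of h t x] T_add[OF c0, of t h x] t by (simp add: add.commute)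
    then show "T t ((1 / h) *\<^sub>R (T h x - x)) = (1 / h) *\<^sub>R (T h (T t x) - T t x)"
      using t by (simp add: T_scaleR T_diff)
  qed simp
  ultimately have lim: "((\<lambda>h. (1 / h) *\<^sub>R (T h (T t x) - T t x)) \<longlongrightarrow> T t (- genA T x)) (at_right 0)"
    by (rule Lim_transform_eventually)
  show "T t x \<in> gen_dom T" using gen_char(1)[OF lim] .
  have "T t (- genA T x) = - T t (genA T x)"
    using T_bl[OF c0 t] linear_neg bounded_linear.linear by blast
  then show "genA T (T t x) = T t (genA T x)" using gen_char(2)[OF lim] by simp
qed

lemma gen_add:
  assumes "x \<in> gen_dom T" "y \<in> gen_dom T"
  shows "x + y \<in> gen_dom T" "genA T (x + y) = genA T x + genA T y"
proof -
  have "((\<lambda>h. (1 / h) *\<^sub>R (T h x - x) + (1 / h) *\<^sub>R (T h y - y)) \<longlongrightarrow> - genA T x + - genA T y) (at_right 0)"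
    by (intro tendsto_add gen_lim assms)
  moreover have "eventually (\<lambda>h. (1 / h) *\<^sub>R (T h x - x) + (1 / h) *\<^sub>R (T h y - y) = (1 / h) *\<^sub>R (T h (x + y) - (x + y))) (at_right 0)"
    unfolding eventually_at_right[of 0 "1::real", simplified]
    by (intro exI[of _ 1]) (auto simp: T_plus algebra_simps)
  ultimately have lim: "((\<lambda>h. (1 / h) *\<^sub>R (T h (x + y) - (x + y))) \<longlongrightarrow> - genA T x + - genA T y) (at_right 0)"
    by (rule Lim_transform_eventually)
  show "x + y \<in> gen_dom T" using gen_char(1)[OF lim] .
  show "genA T (x + y) = genA T x + genA T y" using gen_char(2)[OF lim] by simp
qed

lemma gen_scale:
  assumes "x \<in> gen_dom T"
  shows "a *\<^sub>C x \<in> gen_dom T" "genA T (a *\<^sub>C x) = a *\<^sub>C genA T x"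
proof -
  have "((\<lambda>h. a *\<^sub>C ((1 / h) *\<^sub>R (T h x - x))) \<longlongrightarrow> a *\<^sub>C (- genA T x)) (at_right 0)"
    by (intro bounded_bilinear.tendsto[OF bounded_bilinear_scaleC] tendsto_const gen_lim assms)
  moreover have "eventually (\<lambda>h. a *\<^sub>C ((1 / h) *\<^sub>R (T h x - x)) = (1 / h) *\<^sub>R (T h (a *\<^sub>C x) - a *\<^sub>C x)) (at_right 0)"
    unfolding eventually_at_right[of 0 "1::real", simplified]
    by (intro exI[of _ 1]) (auto simp: T_C[OF c0] scaleC_scaleR_right scaleC_diff_right)
  ultimately have lim: "((\<lambda>h. (1 / h) *\<^sub>R (T h (a *\<^sub>C x) - a *\<^sub>C x)) \<longlongrightarrow> a *\<^sub>C (- genA T x)) (at_right 0)"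
    by (rule Lim_transform_eventually)
  show "a *\<^sub>C x \<in> gen_dom T" using gen_char(1)[OF lim] .
  show "genA T (a *\<^sub>C x) = a *\<^sub>C genA T x" using gen_char(2)[OF lim] by (simp add: scaleC_minus_right)
qed

lemma gen_diff:
  assumes "x \<in> gen_dom T" "y \<in> gen_dom T"
  shows "x - y \<in> gen_dom T" "genA T (x - y) = genA T x - genA T y"
proof -
  have "(-1) *\<^sub>C y \<in> gen_dom T" "genA T ((-1) *\<^sub>C y) = (-1) *\<^sub>C genA T y"
    using gen_scale assms by auto
  then have "-y \<in> gen_dom T" "genA T (-y) = - genA T y" by (auto simp: scaleC_minus_one)
  then show "x - y \<in> gen_dom T" "genA T (x - y) = genA T x - genA T y"
    using gen_add[OF assms(1), of "-y"] by auto
qed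

end


context
  fixes T :: "real \<Rightarrow> 'a::complex_banach \<Rightarrow> 'a"
  assumes c0: "c0_semigroup T"
begin

lemma T_deriv:
  assumes x: "x \<in> gen_dom T" and t: "t \<ge> 0"
  shows "((\<lambda>s. T s x) has_vector_derivative (T t (- genA T x))) (at t within {0..})"
proof -
  define y where "y = - genA T x"
  define D where "D h = (1 / h) *\<^sub>R (T h x - x)" for h
  have Dlim: "(D \<longlongrightarrow> y) (at_right 0)" using gen_lim[OF c0 x] unfolding D_def[abs_def] y_def .
  obtain K where K: "K \<ge> 1" "\<And>s x. s \<in> {0..t+1} \<Longrightarrow> norm (T s x) \<le> K * norm x"
    using T_bound[OF c0, of "t+1"] by blast
  have key: "\<exists>d>0. \<forall>s\<in>{0..}. s \<noteq> t \<and> dist s t < d \<longrightarrow>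
      norm (T s x - T t x - (s - t) *\<^sub>R T t y) / norm (s - t) < e" if e: "e > 0" for e
  proof -
    have "eventually (\<lambda>h. dist (D h) y < e / (2 * K)) (at_right 0)"
      using tendstoD[OF Dlim, of "e / (2*K)"] e K(1) by simp
    then obtain d1 where d1: "d1 > 0" "\<And>h. h > 0 \<Longrightarrow> h < d1 \<Longrightarrow> norm (D h - y) < e / (2 * K)"
      unfolding eventually_at_right[of 0 "1::real", simplified] by (auto simp: dist_norm)
    have "eventually (\<lambda>s. dist (T s y) (T t y) < e / 2) (at t within {0..})"
      using tendstoD[OF T_cont_at[OF c0 t, of y], of "e/2"] e by simp
    then obtain d2 where d2: "d2 > 0" "\<And>s. s \<in> {0..} \<Longrightarrow> s \<noteq> t \<Longrightarrow> dist s t < d2 \<Longrightarrow> norm (T s y - T t y) < e / 2"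
      unfolding eventually_at by (auto simp: dist_norm)
    show ?thesis
    proof (intro exI[of _ "min (min d1 d2) 1"] conjI ballI impI)
      show "min (min d1 d2) 1 > 0" using d1(1) d2(1) by simp
    next
      fix s :: real assume s: "s \<in> {0..}" and st: "s \<noteq> t \<and> dist s t < min (min d1 d2) 1"
      show "norm (T s x - T t x - (s - t) *\<^sub>R T t y) / norm (s - t) < e"
      proof (cases "t < s")
        case True
        define h where "h = s - t"
        have h: "h > 0" "h < d1" using True st by (auto simp: h_def dist_real_def)
        have "T s x = T t (T h x)" using T_add[OF c0, of t h x] h t by (simp add: h_def)
        then have "T s x - T t x - (s - t) *\<^sub>R T t y = T t (T h x - x - h *\<^sub>R y)"
          using t by (simp add: T_diff[OF c0] T_scaleR[OF c0] h_def)
        also have "T h x - x - h *\<^sub>R y = h *\<^sub>R (D h - y)" using h by (simp add: D_def algebra_simps)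
        also have "T t (h *\<^sub>R (D h - y)) = h *\<^sub>R T t (D h - y)" using t by (simp add: T_scaleR[OF c0])
        finally have "norm (T s x - T t x - (s - t) *\<^sub>R T t y) / norm (s - t) = norm (T t (D h - y))"
          using h by (simp add: h_def)
        also have "\<dots> \<le> K * norm (D h - y)" using K(2)[of t] t by simp
        also have "\<dots> < K * (e / (2 * K))"
          using d1(2)[OF h] K(1) by (intro mult_strict_left_mono) auto
        also have "\<dots> < e" using K(1) e by simp
        finally show ?thesis .
      next
        case False
        then have ts: "s < t" using st by auto
        define h where "h = t - s"
        have h: "h > 0" "h < d1" using ts st by (auto simp: h_def dist_real_def)
        have s0: "s \<ge> 0" "s \<in> {0..t+1}" using s ts by auto
        have "T t x = T s (T h x)" using T_add[OF c0, of s h x] h s0 by (simp add: h_def)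
        then have "T s x - T t x - (s - t) *\<^sub>R T t y = h *\<^sub>R (T t y - T s (D h))"
          using s0 h by (simp add: T_diff[OF c0] T_scaleR[OF c0] h_def D_def algebra_simps)
        also have "T t y - T s (D h) = - (T s (D h - y) + (T s y - T t y))"
          using s0 by (simp add: T_diff[OF c0] algebra_simps)
        finally have eq: "T s x - T t x - (s - t) *\<^sub>R T t y = - (h *\<^sub>R (T s (D h - y) + (T s y - T t y)))"
          by (simp add: algebra_simps)
        have "norm (T s x - T t x - (s - t) *\<^sub>R T t y) / norm (s - t) = norm (T s (D h - y) + (T s y - T t y))"
          unfolding eq norm_minus_cancel norm_scaleR using h by (simp add: h_def)
        also have "\<dots> \<le> norm (T s (D h - y)) + norm (T s y - T t y)" by (rule norm_triangle_ineq)
        also have "norm (T s (D h - y)) \<le> K * norm (D h - y)" using K(2)[OF s0(2)] by simp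
        also have "K * norm (D h - y) < K * (e / (2 * K))"
          using d1(2)[OF h] K(1) by (intro mult_strict_left_mono) auto
        also have "K * (e / (2 * K)) = e / 2" using K(1) by simp
        also have "norm (T s y - T t y) < e / 2" using d2(2)[OF s] ts st by auto
        finally show ?thesis by simp
      qed
    qed
  qed
  show ?thesis
    unfolding has_vector_derivative_def has_derivative_iff_norm
  proof
    show "bounded_linear (\<lambda>h. h *\<^sub>R T t (- genA T x))" by (rule bounded_linear_scaleR_left)
    show "((\<lambda>s. norm (T s x - T t x - (s - t) *\<^sub>R T t (- genA T x)) / norm (s - t)) \<longlongrightarrow> 0) (at t within {0..})"
      unfolding tendsto_iff eventually_at using key by (simp add: y_def)
  qed
qed

end


lemma onorm_scaleR_vec: "onorm (\<lambda>h::real. h *\<^sub>R v) = norm v"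
  using onorm_scaleR_left[of "\<lambda>x::real. x" v] onorm_id[where 'a=real] by (simp add: bounded_linear_ident)

context
  fixes T :: "real \<Rightarrow> 'a::complex_banach \<Rightarrow> 'a"
  assumes c0: "c0_semigroup T"
begin

lemma approx_eig:
  assumes x: "x \<in> gen_dom T" and eta: "\<eta> \<ge> 0" and lam: "Re l \<ge> 0"
    and K0: "K \<ge> 0" and K: "\<And>s z. s \<in> {0..\<eta>} \<Longrightarrow> norm (T s z) \<le> K * norm z"
  shows "norm (T \<eta> x - exp (- (complex_of_real \<eta> * l)) *\<^sub>C x) \<le> \<eta> * K * norm (l *\<^sub>C x - genA T x)"
proof -
  define w where "w = l *\<^sub>C x - genA T x"
  define g where "g s = exp (s *\<^sub>R l) *\<^sub>C T s x" for s
  define g' where "g' s = exp (s *\<^sub>R l) *\<^sub>C T s w" for s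
  have der: "(g has_vector_derivative g' s) (at s within {0..\<eta>})" if s: "s \<in> {0..\<eta>}" for s
  proof -
    have s0: "s \<ge> 0" using s by auto
    have d1: "((\<lambda>s. T s x) has_vector_derivative (T s (- genA T x))) (at s within {0..\<eta>})"
      by (rule has_vector_derivative_within_subset[OF T_deriv[OF c0 x s0]]) auto
    have d2: "((\<lambda>s. exp (s *\<^sub>R l)) has_vector_derivative exp (s *\<^sub>R l) * l) (at s within {0..\<eta>})"
      by (rule exp_scaleR_has_vector_derivative_right)
    have "(g has_vector_derivative (exp (s *\<^sub>R l) *\<^sub>C T s (- genA T x) + (exp (s *\<^sub>R l) * l) *\<^sub>C T s x)) (at s within {0..\<eta>})"
      unfolding g_def by (rule bounded_bilinear.has_vector_derivative[OF bounded_bilinear_scaleC d2 d1])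
    moreover have "exp (s *\<^sub>R l) *\<^sub>C T s (- genA T x) + (exp (s *\<^sub>R l) * l) *\<^sub>C T s x = g' s"
    proof -
      have "T s w = l *\<^sub>C T s x - T s (genA T x)"
        using s0 by (simp add: w_def T_diff[OF c0] T_C[OF c0])
      moreover have "T s (- genA T x) = - T s (genA T x)"
        using T_bl[OF c0 s0] linear_neg bounded_linear.linear by blast
      ultimately show ?thesis
        by (simp add: g'_def scaleC_diff_right scaleC_minus_right scaleC_scaleC[symmetric])
    qed
    ultimately show ?thesis by simp
  qed
  have bnd: "onorm (\<lambda>h. h *\<^sub>R g' s) \<le> exp (\<eta> * Re l) * K * norm w" if s: "s \<in> {0..\<eta>}" for s
  proof -
    have "onorm (\<lambda>h. h *\<^sub>R g' s) = exp (s * Re l) * norm (T s w)"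
      by (simp add: onorm_scaleR_vec g'_def norm_scaleC)
    also have "\<dots> \<le> exp (\<eta> * Re l) * (K * norm w)"
      using s lam K[OF s, of w] by (intro mult_mono) (auto intro: mult_right_mono)
    finally show ?thesis by simp
  qed
  have "norm (g \<eta> - g 0) \<le> exp (\<eta> * Re l) * K * norm w * norm (\<eta> - 0)"
    by (rule differentiable_bound[of "{0..\<eta>}" g "\<lambda>s h. h *\<^sub>R g' s"])
       (use der bnd eta in \<open>auto simp: has_vector_derivative_def\<close>)
  then have gb: "norm (g \<eta> - x) \<le> exp (\<eta> * Re l) * K * norm w * \<eta>"
    using eta by (simp add: g_def T0[OF c0] scaleC_one)
  define c where "c = exp (- (complex_of_real \<eta> * l))"
  have "c *\<^sub>C g \<eta> = T \<eta> x"
    by (simp add: c_def g_def scaleC_scaleC scaleR_conv_of_real exp_minus scaleC_one)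
  then have "T \<eta> x - c *\<^sub>C x = c *\<^sub>C (g \<eta> - x)" by (simp add: scaleC_diff_right)
  then have "norm (T \<eta> x - c *\<^sub>C x) = exp (- (\<eta> * Re l)) * norm (g \<eta> - x)"
    by (simp add: norm_scaleC c_def)
  also have "\<dots> \<le> exp (- (\<eta> * Re l)) * (exp (\<eta> * Re l) * K * norm w * \<eta>)"
    using gb by (intro mult_left_mono) auto
  also have "\<dots> = \<eta> * K * norm w" by (simp add: exp_minus field_simps)
  finally show ?thesis by (simp add: c_def w_def)
qed

end


lemma sq_sum_le: "(norm (p + q))\<^sup>2 \<le> 2 * (norm p)\<^sup>2 + 2 * (norm (q::'b::real_normed_vector))\<^sup>2"
proof -
  have "norm (p + q) \<le> norm p + norm q" by (rule norm_triangle_ineq)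
  then have "(norm (p + q))\<^sup>2 \<le> (norm p + norm q)\<^sup>2" by (simp add: power_mono)
  also have "\<dots> \<le> 2 * (norm p)\<^sup>2 + 2 * (norm q)\<^sup>2"
    by (smt (verit, best) sum_squares_bound power2_sum)
  finally show ?thesis .
qed

context
  fixes T :: "real \<Rightarrow> 'a::complex_banach \<Rightarrow> 'a" and C :: "'a \<Rightarrow> 'b::complex_banach"
  assumes c0: "c0_semigroup T" and obs: "obs_operator T C"
begin

lemma Clin: "clinear_on (gen_dom T) C" using obs by (simp add: obs_operator_def)

lemma C_cont:
  assumes x: "x \<in> gen_dom T"
  shows "continuous_on {0..} (\<lambda>t. C (T t x))"
proof -
  obtain KC where KC: "\<And>z. z \<in> gen_dom T \<Longrightarrow> norm (C z) \<le> KC * (norm z + norm (genA T z))"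
    using obs by (auto simp: obs_operator_def)
  define K2 where "K2 = max KC 0"
  have K2: "norm (C z) \<le> K2 * (norm z + norm (genA T z))" if "z \<in> gen_dom T" for z
  proof -
    have "KC * (norm z + norm (genA T z)) \<le> K2 * (norm z + norm (genA T z))"
      unfolding K2_def by (intro mult_right_mono) auto
    then show ?thesis using KC[OF that] by linarith
  qed
  show ?thesis unfolding continuous_on_def
  proof (intro ballI)
    fix t :: real assume "t \<in> {0..}" then have t: "t \<ge> 0" by simp
    define f where "f s = norm (T s x - T t x) + norm (T s (genA T x) - T t (genA T x))" for s
    have f0: "(f \<longlongrightarrow> 0) (at t within {0..})"
      unfolding f_def
      using tendsto_add[OF tendsto_norm_zero[OF LIM_zero[OF T_cont_at[OF c0 t, of x]]]
                           tendsto_norm_zero[OF LIM_zero[OF T_cont_at[OF c0 t, of "genA T x"]]]] by simp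
    have ev: "eventually (\<lambda>s. norm (C (T s x) - C (T t x)) \<le> norm (f s) * K2) (at t within {0..})"
      unfolding eventually_at
    proof (intro exI[of _ 1] conjI ballI impI)
      fix s :: real assume "s \<in> {0..}" then have s: "s \<ge> 0" by simp
      have Ds: "T s x \<in> gen_dom T" "T t x \<in> gen_dom T" using gen_T[OF c0 x] s t by auto
      have "C (T s x) - C (T t x) = C (T s x - T t x)" using clinear_on_diff(2)[OF Clin Ds] by simp
      moreover have "T s x - T t x \<in> gen_dom T" "genA T (T s x - T t x) = T s (genA T x) - T t (genA T x)"
        using gen_diff[OF c0 Ds] gen_T[OF c0 x] s t by auto
      ultimately have "norm (C (T s x) - C (T t x)) \<le> K2 * f s" using K2[of "T s x - T t x"] by (simp add: f_def)
      also have "\<dots> = norm (f s) * K2" by (simp add: f_def mult.commute)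
      finally show "norm (C (T s x) - C (T t x)) \<le> norm (f s) * K2" .
    qed simp
    have "((\<lambda>s. C (T s x) - C (T t x)) \<longlongrightarrow> 0) (at t within {0..})"
      by (rule tendsto_0_le[OF f0 ev])
    then show "((\<lambda>s. C (T s x)) \<longlongrightarrow> C (T t x)) (at t within {0..})"
      by (simp add: LIM_zero_iff)
  qed
qed

lemma E_meas:
  assumes x: "x \<in> gen_dom T" and S: "S \<subseteq> {0..}" "S \<in> sets borel"
  shows "(\<lambda>t. ennreal ((norm (C (T t x)))\<^sup>2) * indicator S t) \<in> borel_measurable borel"
proof -
  define h where "h t = indicator {0..} t *\<^sub>R C (T t x)" for t :: real
  have [measurable]: "h \<in> borel_measurable borel"
    unfolding h_def by (rule borel_measurable_continuous_on_indicator[OF _ C_cont[OF x]]) auto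
  have [measurable]: "S \<in> sets borel" by (rule S(2))
  have "(\<lambda>t. ennreal ((norm (C (T t x)))\<^sup>2) * indicator S t) = (\<lambda>t. ennreal ((norm (h t))\<^sup>2) * indicator S t)"
    using S(1) by (intro ext) (auto simp: h_def indicator_def)
  moreover have "(\<lambda>t. ennreal ((norm (h t))\<^sup>2) * indicator S t) \<in> borel_measurable borel"
    by measurable
  ultimately show ?thesis by simp
qed

lemma E_def2: "obs_energy T C \<tau> x = (\<integral>\<^sup>+t. ennreal ((norm (C (T t x)))\<^sup>2) * indicator {0..\<tau>} t \<partial>lborel)"
  by (simp add: obs_energy_def)

lemma E_split:
  assumes x: "x \<in> gen_dom T" and a: "a \<ge> 0" and b: "b \<ge> 0"
  shows "obs_energy T C (a + b) x \<le> obs_energy T C a x + obs_energy T C b (T a x)"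
proof -
  define F where "F t = ennreal ((norm (C (T t x)))\<^sup>2)" for t
  have m1: "(\<lambda>t. F t * indicator {0..a} t) \<in> borel_measurable lborel"
    using E_meas[OF x, of "{0..a}"] by (simp add: F_def)
  have m2: "(\<lambda>t. F t * indicator {a..a+b} t) \<in> borel_measurable borel"
    using E_meas[OF x, of "{a..a+b}"] a by (simp add: F_def)
  have "obs_energy T C (a + b) x = (\<integral>\<^sup>+t. F t * indicator {0..a+b} t \<partial>lborel)"
    by (simp add: E_def2 F_def)
  also have "\<dots> \<le> (\<integral>\<^sup>+t. F t * indicator {0..a} t + F t * indicator {a..a+b} t \<partial>lborel)"
    by (intro nn_integral_mono) (auto simp: indicator_def)
  also have "\<dots> = (\<integral>\<^sup>+t. F t * indicator {0..a} t \<partial>lborel) + (\<integral>\<^sup>+t. F t * indicator {a..a+b} t \<partial>lborel)"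
    using m1 m2 by (intro nn_integral_add) auto
  also have "(\<integral>\<^sup>+t. F t * indicator {0..a} t \<partial>lborel) = obs_energy T C a x"
    by (simp add: E_def2 F_def)
  also have "(\<integral>\<^sup>+t. F t * indicator {a..a+b} t \<partial>lborel)
      = (\<integral>\<^sup>+s. F (a + 1 * s) * indicator {a..a+b} (a + 1 * s) \<partial>lborel)"
    using nn_integral_real_affine[OF m2, of 1 a] by simp
  also have "\<dots> = obs_energy T C b (T a x)"
    unfolding E_def2
  proof (intro nn_integral_cong)
    fix s :: real
    show "F (a + 1 * s) * indicator {a..a+b} (a + 1 * s) = ennreal ((norm (C (T s (T a x))))\<^sup>2) * indicator {0..b} s"
    proof (cases "s \<in> {0..b}")
      case True
      then have "T (a + s) x = T s (T a x)" using T_add[OF c0, of s a x] a by (simp add: add.commute)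
      then show ?thesis using True by (simp add: F_def indicator_def)
    next
      case False
      then show ?thesis by (auto simp: indicator_def)
    qed
  qed
  finally show ?thesis by simp
qed

lemma E_scale:
  assumes x: "x \<in> gen_dom T"
  shows "obs_energy T C \<tau> (c *\<^sub>C x) = ennreal ((cmod c)\<^sup>2) * obs_energy T C \<tau> x"
proof -
  have m: "(\<lambda>t. ennreal ((norm (C (T t x)))\<^sup>2) * indicator {0..\<tau>} t) \<in> borel_measurable lborel"
    using E_meas[OF x, of "{0..\<tau>}"] by simp
  have "obs_energy T C \<tau> (c *\<^sub>C x) = (\<integral>\<^sup>+t. ennreal ((cmod c)\<^sup>2) * (ennreal ((norm (C (T t x)))\<^sup>2) * indicator {0..\<tau>} t) \<partial>lborel)"
    unfolding E_def2
  proof (intro nn_integral_cong)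
    fix t :: real
    show "ennreal ((norm (C (T t (c *\<^sub>C x))))\<^sup>2) * indicator {0..\<tau>} t = ennreal ((cmod c)\<^sup>2) * (ennreal ((norm (C (T t x)))\<^sup>2) * indicator {0..\<tau>} t)"
    proof (cases "t \<in> {0..\<tau>}")
      case True
      then have t: "t \<ge> 0" by simp
      have "C (T t (c *\<^sub>C x)) = c *\<^sub>C C (T t x)"
        using T_C[OF c0 t] clinear_on_scale(2)[OF Clin gen_T(1)[OF c0 x t]] by simp
      then have "(norm (C (T t (c *\<^sub>C x))))\<^sup>2 = (cmod c)\<^sup>2 * (norm (C (T t x)))\<^sup>2"
        by (simp add: norm_scaleC power_mult_distrib)
      then show ?thesis using True by (simp add: ennreal_mult)
    qed (auto simp: indicator_def)
  qed
  also have "\<dots> = ennreal ((cmod c)\<^sup>2) * obs_energy T C \<tau> x"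
    using m by (simp add: nn_integral_cmult E_def2)
  finally show ?thesis .
qed

lemma E_zero:
  assumes x: "x \<in> gen_dom T"
  shows "obs_energy T C \<tau> 0 = 0"
  using E_scale[OF x, of \<tau> 0] by simp

lemma E_le_M2:
  assumes x: "x \<in> gen_dom T"
  shows "obs_energy T C \<tau> x \<le> obs_M2 T C \<tau> * ennreal ((norm x)\<^sup>2)"
proof (cases "x = 0")
  case True
  then show ?thesis using E_zero[OF x] by simp
next
  case False
  define u where "u = complex_of_real (1 / norm x) *\<^sub>C x"
  have u: "u \<in> gen_dom T" "norm u = 1" using False clinear_on_scale(1)[OF Clin x]
    by (auto simp: u_def norm_scaleC norm_divide)
  have xu: "x = complex_of_real (norm x) *\<^sub>C u"
    using False by (simp add: u_def scaleC_scaleC scaleC_one flip: of_real_mult)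
  have eq: "obs_energy T C \<tau> x = ennreal ((norm x)\<^sup>2) * obs_energy T C \<tau> u"
    using E_scale[OF u(1), of \<tau> "complex_of_real (norm x)"] xu by simp
  have le: "obs_energy T C \<tau> u \<le> obs_M2 T C \<tau>"
    unfolding obs_M2_def using u by (intro SUP_upper) auto
  show ?thesis unfolding eq using mult_left_mono[OF le, of "ennreal ((norm x)\<^sup>2)"]
    by (simp add: mult.commute)
qed

lemma E_add:
  assumes u: "u \<in> gen_dom T" and v: "v \<in> gen_dom T"
  shows "obs_energy T C \<tau> (u + v) \<le> 2 * obs_energy T C \<tau> u + 2 * obs_energy T C \<tau> v"
proof -
  have mu: "(\<lambda>t. ennreal ((norm (C (T t u)))\<^sup>2) * indicator {0..\<tau>} t) \<in> borel_measurable lborel"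
    using E_meas[OF u, of "{0..\<tau>}"] by simp
  have mv: "(\<lambda>t. ennreal ((norm (C (T t v)))\<^sup>2) * indicator {0..\<tau>} t) \<in> borel_measurable lborel"
    using E_meas[OF v, of "{0..\<tau>}"] by simp
  have "obs_energy T C \<tau> (u + v) \<le> (\<integral>\<^sup>+t. 2 * (ennreal ((norm (C (T t u)))\<^sup>2) * indicator {0..\<tau>} t)
        + 2 * (ennreal ((norm (C (T t v)))\<^sup>2) * indicator {0..\<tau>} t) \<partial>lborel)"
    unfolding E_def2
  proof (intro nn_integral_mono)
    fix t :: real
    show "ennreal ((norm (C (T t (u + v))))\<^sup>2) * indicator {0..\<tau>} t \<le> 2 * (ennreal ((norm (C (T t u)))\<^sup>2) * indicator {0..\<tau>} t)
        + 2 * (ennreal ((norm (C (T t v)))\<^sup>2) * indicator {0..\<tau>} t)"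
    proof (cases "t \<in> {0..\<tau>}")
      case True
      then have t: "t \<ge> 0" by simp
      have "C (T t (u + v)) = C (T t u) + C (T t v)"
        using T_plus[OF c0 t] clinear_on_add(2)[OF Clin gen_T(1)[OF c0 u t] gen_T(1)[OF c0 v t]] by simp
      then have "(norm (C (T t (u + v))))\<^sup>2 \<le> 2 * (norm (C (T t u)))\<^sup>2 + 2 * (norm (C (T t v)))\<^sup>2"
        using sq_sum_le by metis
      then have "ennreal ((norm (C (T t (u + v))))\<^sup>2) \<le> ennreal (2 * (norm (C (T t u)))\<^sup>2 + 2 * (norm (C (T t v)))\<^sup>2)"
        by (rule ennreal_leI)
      also have "\<dots> = 2 * ennreal ((norm (C (T t u)))\<^sup>2) + 2 * ennreal ((norm (C (T t v)))\<^sup>2)"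
        by (simp add: ennreal_plus ennreal_mult)
      finally show ?thesis using True by simp
    qed (auto simp: indicator_def)
  qed
  also have "\<dots> = 2 * obs_energy T C \<tau> u + 2 * obs_energy T C \<tau> v"
    using mu mv by (simp add: nn_integral_add nn_integral_cmult E_def2)
  finally show ?thesis .
qed

end


context
  fixes T :: "real \<Rightarrow> 'a::complex_banach \<Rightarrow> 'a" and C :: "'a \<Rightarrow> 'b::complex_banach"
  assumes c0: "c0_semigroup T" and obs: "obs_operator T C"
begin

lemma E_mono: "\<tau> \<le> \<tau>' \<Longrightarrow> obs_energy T C \<tau> x \<le> obs_energy T C \<tau>' x"
  unfolding obs_energy_def by (intro nn_integral_mono) (auto simp: indicator_def)

lemma M2_mono: "\<tau> \<le> \<tau>' \<Longrightarrow> obs_M2 T C \<tau> \<le> obs_M2 T C \<tau>'"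
  unfolding obs_M2_def by (intro SUP_subset_mono) (auto intro: E_mono)

lemma M2_finite:
  assumes adm: "admissible T C"
  shows "obs_M2 T C \<tau> < \<infinity>"
proof -
  obtain \<tau>0 where t0: "\<tau>0 > 0" "obs_M2 T C \<tau>0 < \<infinity>" using adm by (auto simp: admissible_def)
  obtain KT where KT: "KT \<ge> 1" "\<And>s z. s \<in> {0..\<tau>0} \<Longrightarrow> norm (T s z) \<le> KT * norm z"
    using T_bound[OF c0, of \<tau>0] by blast
  have ind: "obs_M2 T C (real n * \<tau>0) < \<infinity>" for n
  proof (induction n)
    case 0
    have "obs_M2 T C (real 0 * \<tau>0) \<le> obs_M2 T C \<tau>0" using t0 by (intro M2_mono) simp
    then show ?case using t0 by (simp add: le_less_trans)
  next
    case (Suc n)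
    have "obs_M2 T C (real (Suc n) * \<tau>0) \<le> obs_M2 T C \<tau>0 + obs_M2 T C (real n * \<tau>0) * ennreal (KT\<^sup>2)"
      unfolding obs_M2_def[of T C "real (Suc n) * \<tau>0"]
    proof (intro SUP_least)
      fix x assume x: "x \<in> {x \<in> gen_dom T. norm x = 1}"
      then have xd: "x \<in> gen_dom T" and nx: "norm x = 1" by auto
      have "obs_energy T C (real (Suc n) * \<tau>0) x = obs_energy T C (\<tau>0 + real n * \<tau>0) x"
        by (simp add: algebra_simps)
      also have "\<dots> \<le> obs_energy T C \<tau>0 x + obs_energy T C (real n * \<tau>0) (T \<tau>0 x)"
        using E_split[OF c0 obs xd, of \<tau>0 "real n * \<tau>0"] t0 by simp
      also have "obs_energy T C \<tau>0 x \<le> obs_M2 T C \<tau>0"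
        unfolding obs_M2_def using x by (intro SUP_upper)
      also have "obs_energy T C (real n * \<tau>0) (T \<tau>0 x) \<le> obs_M2 T C (real n * \<tau>0) * ennreal ((norm (T \<tau>0 x))\<^sup>2)"
        using E_le_M2[OF c0 obs gen_T(1)[OF c0 xd]] t0 by simp
      also have "ennreal ((norm (T \<tau>0 x))\<^sup>2) \<le> ennreal (KT\<^sup>2)"
        using KT(2)[of \<tau>0 x] nx t0 by (intro ennreal_leI power_mono) auto
      finally show "obs_energy T C (real (Suc n) * \<tau>0) x \<le> obs_M2 T C \<tau>0 + obs_M2 T C (real n * \<tau>0) * ennreal (KT\<^sup>2)"
        by (simp add: add_left_mono mult_left_mono)
    qed
    also have "\<dots> < \<infinity>" using t0 Suc.IH by (simp add: ennreal_mult_less_top)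
    finally show ?case .
  qed
  obtain n :: nat where "\<tau> / \<tau>0 \<le> real n" using real_arch_simple by blast
  then have "\<tau> \<le> real n * \<tau>0" using t0 by (simp add: divide_le_eq)
  then have "obs_M2 T C \<tau> \<le> obs_M2 T C (real n * \<tau>0)" by (rule M2_mono)
  then show ?thesis using ind[of n] by (simp add: le_less_trans)
qed

lemma key_ineq:
  assumes adm: "admissible T C" and eta: "0 < \<eta>" "\<eta> < \<tau>"
    and l: "l \<in> approx_point_spectrum T" and lam: "Re l \<ge> 0" and eps: "\<epsilon> > 0"
    and K0: "K \<ge> 0" and K: "\<And>s z. s \<in> {0..\<eta>} \<Longrightarrow> norm (T s z) \<le> K * norm z"
  shows "enn2real (obs_m2 T C \<tau>) \<le> enn2real (obs_M2 T C \<eta>)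
           + 2 * (exp (- (\<eta> * Re l)))\<^sup>2 * enn2real (obs_M2 T C (\<tau> - \<eta>))
           + 2 * enn2real (obs_M2 T C (\<tau> - \<eta>)) * (\<eta> * K * \<epsilon>)\<^sup>2"
proof -
  define U where "U = {x \<in> gen_dom T. norm x = 1}"
  have "(INF x\<in>U. ennreal (norm (l *\<^sub>C x - genA T x))) < ennreal \<epsilon>"
    using l eps by (simp add: approx_point_spectrum_def U_def)
  then obtain x where xU: "x \<in> U" and xe: "ennreal (norm (l *\<^sub>C x - genA T x)) < ennreal \<epsilon>"
    by (auto simp: INF_less_iff)
  have xd: "x \<in> gen_dom T" and nx: "norm x = 1" using xU by (auto simp: U_def)
  have xe': "norm (l *\<^sub>C x - genA T x) < \<epsilon>" using xe by (simp add: ennreal_less_iff)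
  define c where "c = exp (- (complex_of_real \<eta> * l))"
  define d where "d = T \<eta> x - c *\<^sub>C x"
  define b where "b = \<tau> - \<eta>"
  have b: "b \<ge> 0" using eta by (simp add: b_def)
  have Tx: "T \<eta> x \<in> gen_dom T" using gen_T(1)[OF c0 xd] eta by simp
  have cx: "c *\<^sub>C x \<in> gen_dom T" using gen_scale(1)[OF c0 xd] .
  have dd: "d \<in> gen_dom T" unfolding d_def using gen_diff(1)[OF c0 Tx cx] .
  have nd: "norm d \<le> \<eta> * K * \<epsilon>"
  proof -
    have "norm d \<le> \<eta> * K * norm (l *\<^sub>C x - genA T x)"
      unfolding d_def c_def using approx_eig[OF c0 xd _ lam K0 K] eta by simp
    also have "\<dots> \<le> \<eta> * K * \<epsilon>" using xe' eta K0 by (intro mult_left_mono) auto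
    finally show ?thesis .
  qed
  have Tsplit: "T \<eta> x = c *\<^sub>C x + d" by (simp add: d_def)
  have fin: "obs_M2 T C t < \<infinity>" for t using M2_finite[OF adm] .
  have "obs_m2 T C \<tau> \<le> obs_energy T C \<tau> x"
    unfolding obs_m2_def using xU U_def by (intro INF_lower) auto
  also have "\<dots> = obs_energy T C (\<eta> + b) x" by (simp add: b_def)
  also have "\<dots> \<le> obs_energy T C \<eta> x + obs_energy T C b (T \<eta> x)"
    using E_split[OF c0 obs xd, of \<eta> b] eta b by simp
  also have "obs_energy T C \<eta> x \<le> obs_M2 T C \<eta>"
    unfolding obs_M2_def using xd nx by (intro SUP_upper) auto
  also have "obs_energy T C b (T \<eta> x) \<le> 2 * obs_energy T C b (c *\<^sub>C x) + 2 * obs_energy T C b d"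
    unfolding Tsplit by (rule E_add[OF c0 obs cx dd])
  also have "obs_energy T C b (c *\<^sub>C x) = ennreal ((cmod c)\<^sup>2) * obs_energy T C b x"
    by (rule E_scale[OF c0 obs xd])
  also have "obs_energy T C b x \<le> obs_M2 T C b"
    unfolding obs_M2_def using xd nx by (intro SUP_upper) auto
  also have "obs_energy T C b d \<le> obs_M2 T C b * ennreal ((norm d)\<^sup>2)"
    by (rule E_le_M2[OF c0 obs dd])
  finally have ineq: "obs_m2 T C \<tau> \<le> obs_M2 T C \<eta> + (2 * (ennreal ((cmod c)\<^sup>2) * obs_M2 T C b)
       + 2 * (obs_M2 T C b * ennreal ((norm d)\<^sup>2)))"
    by (simp add: add_left_mono mult_left_mono add_mono)
  define M\<eta> where "M\<eta> = enn2real (obs_M2 T C \<eta>)"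
  define Mb where "Mb = enn2real (obs_M2 T C b)"
  have eM\<eta>: "obs_M2 T C \<eta> = ennreal M\<eta>" using fin[of \<eta>] by (simp add: M\<eta>_def)
  have eMb: "obs_M2 T C b = ennreal Mb" using fin[of b] by (simp add: Mb_def)
  have Mb0: "Mb \<ge> 0" "M\<eta> \<ge> 0" by (simp_all add: Mb_def M\<eta>_def)
  have "obs_m2 T C \<tau> \<le> ennreal (M\<eta> + (2 * ((cmod c)\<^sup>2 * Mb) + 2 * (Mb * (norm d)\<^sup>2)))"
    using ineq Mb0 unfolding eM\<eta> eMb by (simp add: ennreal_plus ennreal_mult ennreal_mult' flip: ennreal_numeral)
  then have A: "enn2real (obs_m2 T C \<tau>) \<le> M\<eta> + (2 * ((cmod c)\<^sup>2 * Mb) + 2 * (Mb * (norm d)\<^sup>2))"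
    using Mb0 by (intro enn2real_leI) auto
  have B: "2 * (Mb * (norm d)\<^sup>2) \<le> 2 * Mb * (\<eta> * K * \<epsilon>)\<^sup>2"
    using nd Mb0 by (simp add: mult_left_mono power_mono)
  have cc: "2 * ((cmod c)\<^sup>2 * Mb) = 2 * (exp (- (\<eta> * Re l)))\<^sup>2 * Mb" by (simp add: c_def)
  have "enn2real (obs_m2 T C \<tau>) \<le> M\<eta> + 2 * (exp (- (\<eta> * Re l)))\<^sup>2 * Mb + 2 * Mb * (\<eta> * K * \<epsilon>)\<^sup>2"
    using A B cc by linarith
  then show ?thesis by (simp add: M\<eta>_def Mb_def b_def)
qed

lemma core:
  assumes bfc: "BFC_system T C"
  shows "\<exists>R. \<forall>l\<in>approx_point_spectrum T. Re l \<le> R"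
proof (cases "approx_point_spectrum T = {}")
  case True
  then show ?thesis by auto
next
  case False
  obtain \<eta> \<tau> where et: "0 < \<eta>" "\<eta> < \<tau>" and adm: "admissible T C"
    and lt: "obs_M2 T C \<eta> < obs_m2 T C \<tau>"
    using bfc by (auto simp: BFC_system_def)
  obtain K where K: "K \<ge> 1" "\<And>s z. s \<in> {0..\<eta>} \<Longrightarrow> norm (T s z) \<le> K * norm z"
    using T_bound[OF c0, of \<eta>] by blast
  obtain l0 where "l0 \<in> approx_point_spectrum T" using False by blast
  then have "{x \<in> gen_dom T. norm x = 1} \<noteq> {}"
  proof (rule contrapos_pn)
    assume e: "{x \<in> gen_dom T. norm x = 1} = {}"
    show "l0 \<notin> approx_point_spectrum T" unfolding approx_point_spectrum_def e by simp
  qed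
  then obtain x0 where x0: "x0 \<in> gen_dom T" "norm x0 = 1" by auto
  have fin: "obs_M2 T C t < \<infinity>" for t using M2_finite[OF adm] .
  have "obs_m2 T C \<tau> \<le> obs_energy T C \<tau> x0"
    unfolding obs_m2_def using x0 by (intro INF_lower) auto
  also have "\<dots> \<le> obs_M2 T C \<tau>"
    unfolding obs_M2_def using x0 by (intro SUP_upper) auto
  finally have finm: "obs_m2 T C \<tau> < \<infinity>" using fin[of \<tau>] by (simp add: le_less_trans)
  define M\<eta> where "M\<eta> = enn2real (obs_M2 T C \<eta>)"
  define Mb where "Mb = enn2real (obs_M2 T C (\<tau> - \<eta>))"
  define m\<tau> where "m\<tau> = enn2real (obs_m2 T C \<tau>)"
  have Mb0: "Mb \<ge> 0" "M\<eta> \<ge> 0" by (simp_all add: Mb_def M\<eta>_def)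
  have "ennreal M\<eta> < ennreal m\<tau>"
    using lt fin[of \<eta>] finm by (simp add: M\<eta>_def m\<tau>_def)
  then have gap: "M\<eta> < m\<tau>" using Mb0 by (simp add: ennreal_less_iff)
  define gap where "gap = m\<tau> - M\<eta>"
  have g0: "gap > 0" using gap by (simp add: gap_def)
  have main: "gap \<le> 2 * exp (- (2 * \<eta> * Re l)) * Mb"
    if l: "l \<in> approx_point_spectrum T" and lam: "Re l \<ge> 0" for l
  proof -
    have "m\<tau> \<le> M\<eta> + 2 * exp (- (2 * \<eta> * Re l)) * Mb"
    proof (rule field_le_epsilon)
      fix \<delta> :: real assume d: "\<delta> > 0"
      define \<epsilon> where "\<epsilon> = sqrt (\<delta> / (2 * Mb + 1)) / (\<eta> * K + 1)"
      have pos: "\<eta> * K + 1 > 0" "2 * Mb + 1 > 0" using et K Mb0 by (auto intro: add_pos_nonneg)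
      have e0: "\<epsilon> > 0" using d pos by (simp add: \<epsilon>_def)
      have ki: "m\<tau> \<le> M\<eta> + 2 * (exp (- (\<eta> * Re l)))\<^sup>2 * Mb + 2 * Mb * (\<eta> * K * \<epsilon>)\<^sup>2"
        using key_ineq[OF adm et l lam e0 _ K(2)] K(1) by (simp add: m\<tau>_def M\<eta>_def Mb_def)
      have "\<eta> * K * \<epsilon> \<le> (\<eta> * K + 1) * \<epsilon>" using e0 by (simp add: algebra_simps)
      moreover have "0 \<le> \<eta> * K * \<epsilon>" using et K e0 by simp
      ultimately have "(\<eta> * K * \<epsilon>)\<^sup>2 \<le> ((\<eta> * K + 1) * \<epsilon>)\<^sup>2" by (rule power_mono)
      also have "((\<eta> * K + 1) * \<epsilon>)\<^sup>2 = \<delta> / (2 * Mb + 1)"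
        using pos d by (simp add: \<epsilon>_def power_divide power_mult_distrib)
      finally have "2 * Mb * (\<eta> * K * \<epsilon>)\<^sup>2 \<le> 2 * Mb * (\<delta> / (2 * Mb + 1))"
        using Mb0 by (intro mult_left_mono) auto
      also have "\<dots> \<le> \<delta>" using pos d Mb0 by (simp add: field_simps)
      finally have "2 * Mb * (\<eta> * K * \<epsilon>)\<^sup>2 \<le> \<delta>" .
      moreover have "(exp (- (\<eta> * Re l)))\<^sup>2 = exp (- (2 * \<eta> * Re l))"
        by (simp add: power2_eq_square exp_add[symmetric])
      ultimately show "m\<tau> \<le> M\<eta> + 2 * exp (- (2 * \<eta> * Re l)) * Mb + \<delta>" using ki by simp
    qed
    then show ?thesis by (simp add: gap_def)
  qed
  define R where "R = max 0 (- ln (gap / (2 * Mb)) / (2 * \<eta>))"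
  show ?thesis
  proof (intro exI[of _ R] ballI)
    fix l assume l: "l \<in> approx_point_spectrum T"
    show "Re l \<le> R"
    proof (cases "Re l \<ge> 0")
      case False then show ?thesis by (simp add: R_def)
    next
      case True
      have m: "gap \<le> 2 * exp (- (2 * \<eta> * Re l)) * Mb" using main[OF l True] .
      have Mbp: "Mb > 0"
      proof (rule ccontr)
        assume "\<not> Mb > 0" then have "Mb = 0" using Mb0 by simp
        then show False using m g0 by simp
      qed
      have q: "gap / (2 * Mb) \<le> exp (- (2 * \<eta> * Re l))" using m Mbp by (simp add: field_simps)
      have "ln (gap / (2 * Mb)) \<le> - (2 * \<eta> * Re l)"
        using q g0 Mbp by (subst ln_exp[symmetric]) (simp del: ln_exp)
      then have "Re l \<le> - ln (gap / (2 * Mb)) / (2 * \<eta>)" using et by (simp add: field_simps)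
      then show ?thesis by (simp add: R_def)
    qed
  qed
qed

end

theorem proposition3p3:
  fixes T :: "real \<Rightarrow> 'x::complex_banach \<Rightarrow> 'x"
    and C :: "'x \<Rightarrow> 'y::complex_banach"
  assumes "c0_semigroup T"
    and "obs_operator T C"
  shows "(BFC_system T C \<longrightarrow>
            \<not> (\<exists>l :: nat \<Rightarrow> complex. (\<forall>n. l n \<in> approx_point_spectrum T) \<and>
                   filterlim (\<lambda>n. Re (l n)) at_top sequentially) \<and>
            bdd_above (Re ` approx_point_spectrum T))
       \<and> ((zero_class_admissible T C \<and>
            (\<exists>l :: nat \<Rightarrow> complex. (\<forall>n. l n \<in> approx_point_spectrum T) \<and>
                   filterlim (\<lambda>n. Re (l n)) at_top sequentially))
          \<longrightarrow> (\<forall>\<eta>>0. \<not> exactly_observable T C \<eta>))"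
proof -
  have noseq: "\<not> (\<exists>l :: nat \<Rightarrow> complex. (\<forall>n. l n \<in> approx_point_spectrum T) \<and>
                   filterlim (\<lambda>n. Re (l n)) at_top sequentially)"
    if bfc: "BFC_system T C"
  proof
    assume "\<exists>l :: nat \<Rightarrow> complex. (\<forall>n. l n \<in> approx_point_spectrum T) \<and>
                   filterlim (\<lambda>n. Re (l n)) at_top sequentially"
    then obtain l :: "nat \<Rightarrow> complex" where l: "\<And>n. l n \<in> approx_point_spectrum T"
      and lim: "filterlim (\<lambda>n. Re (l n)) at_top sequentially" by blast
    obtain R where R: "\<forall>l\<in>approx_point_spectrum T. Re l \<le> R" using core[OF assms bfc] by blast
    have "eventually (\<lambda>n. R < Re (l n)) sequentially"
      using lim by (simp add: filterlim_at_top_dense)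
    then obtain N where "\<And>n. n \<ge> N \<Longrightarrow> R < Re (l n)" by (auto simp: eventually_sequentially)
    then show False using R l[of N] by force
  qed
  have i: "BFC_system T C \<longrightarrow>
            \<not> (\<exists>l :: nat \<Rightarrow> complex. (\<forall>n. l n \<in> approx_point_spectrum T) \<and>
                   filterlim (\<lambda>n. Re (l n)) at_top sequentially) \<and>
            bdd_above (Re ` approx_point_spectrum T)"
  proof
    assume bfc: "BFC_system T C"
    obtain R where R: "\<forall>l\<in>approx_point_spectrum T. Re l \<le> R" using core[OF assms bfc] by blast
    have "bdd_above (Re ` approx_point_spectrum T)" using R by (intro bdd_aboveI[of _ R]) auto
    then show "\<not> (\<exists>l :: nat \<Rightarrow> complex. (\<forall>n. l n \<in> approx_point_spectrum T) \<and>
                   filterlim (\<lambda>n. Re (l n)) at_top sequentially) \<and>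
            bdd_above (Re ` approx_point_spectrum T)" using noseq[OF bfc] by blast
  qed
  have ii: "(zero_class_admissible T C \<and>
            (\<exists>l :: nat \<Rightarrow> complex. (\<forall>n. l n \<in> approx_point_spectrum T) \<and>
                   filterlim (\<lambda>n. Re (l n)) at_top sequentially))
          \<longrightarrow> (\<forall>\<eta>>0. \<not> exactly_observable T C \<eta>)"
  proof (intro impI allI notI)
    fix \<eta> :: real
    assume h: "zero_class_admissible T C \<and>
            (\<exists>l :: nat \<Rightarrow> complex. (\<forall>n. l n \<in> approx_point_spectrum T) \<and>
                   filterlim (\<lambda>n. Re (l n)) at_top sequentially)"
      and e: "\<eta> > 0" and eo: "exactly_observable T C \<eta>"
    have adm: "admissible T C" and tz: "((obs_M2 T C) \<longlongrightarrow> 0) (at_right 0)"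
      using h by (auto simp: zero_class_admissible_def)
    have m0: "obs_m2 T C \<eta> > 0" using eo by (simp add: exactly_observable_def)
    have "eventually (\<lambda>s. obs_M2 T C s < obs_m2 T C \<eta>) (at_right 0)"
      using order_tendstoD(2)[OF tz m0] .
    then obtain b where b: "b > 0" "\<And>y. y > 0 \<Longrightarrow> y < b \<Longrightarrow> obs_M2 T C y < obs_m2 T C \<eta>"
      unfolding eventually_at_right[of 0 \<eta>, OF e] by auto
    define s where "s = min b \<eta> / 2"
    have s: "0 < s" "s < \<eta>" "s < b" using b e by (auto simp: s_def)
    have "BFC_system T C"
      unfolding BFC_system_def using s adm eo b(2)[OF s(1) s(3)] by blast
    then show False using noseq h by blast
  qed
  show ?thesis using i ii by blast
qed


end
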